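(* We have $\mathrm{ppn}(K_{1,1,c})=1$ for all positive integers $c$ if and only if the Twin Prime Conjecture (there are infinitely many primes $p$ such that $p+2$ is also prime) is true.
   Context: $K_{1,1,c}$ is the complete 3-partite graph with partite sets of sizes $1,1,c$. A $k$-prime product distance labeling of a finite graph $G$ (for a positive integer $k$) is an injective map $L:V(G)\to\mathbb{Z}$ such that $|L(u)-L(v)|>1$ for all distinct vertices $u,v$ of $G$, and such that for every pair of adjacent vertices $u,v$ the integer $|L(u)-L(v)|$ has at most $k$ prime factors counted with multiplicity. The prime product number $\mathrm{ppn}(G)$ is the least positive integer $k$ such that $G$ has a $k$-prime product distance labeling. *)

theory Defs
  imports "HOL-Computational_Algebra.Primes"
begin

text \<open>K_{1,1,c}: vertices 0, 1, 2, ..., c+1; partite sets {0}, {1}, {2..c+1}.\<close>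
definition K11c_V :: "nat \<Rightarrow> nat set" where
  "K11c_V c = {0..c+1}"

definition K11c_part :: "nat \<Rightarrow> nat" where
  "K11c_part v = min v 2"

definition K11c_E :: "nat \<Rightarrow> nat \<Rightarrow> nat \<Rightarrow> bool" where
  "K11c_E c u v \<longleftrightarrow> u \<in> K11c_V c \<and> v \<in> K11c_V c \<and> K11c_part u \<noteq> K11c_part v"

definition Omega :: "nat \<Rightarrow> nat" where
  "Omega n = size (prime_factorization n)"

definition is_prime_product_labeling ::
    "'a set \<Rightarrow> ('a \<Rightarrow> 'a \<Rightarrow> bool) \<Rightarrow> nat \<Rightarrow> ('a \<Rightarrow> int) \<Rightarrow> bool" where
  "is_prime_product_labeling V E k L \<longleftrightarrow>
     inj_on L V \<and>
     (\<forall>u\<in>V. \<forall>v\<in>V. u \<noteq> v \<longrightarrow> \<bar>L u - L v\<bar> > 1) \<and>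
     (\<forall>u\<in>V. \<forall>v\<in>V. E u v \<longrightarrow> Omega (nat \<bar>L u - L v\<bar>) \<le> k)"

definition ppn :: "'a set \<Rightarrow> ('a \<Rightarrow> 'a \<Rightarrow> bool) \<Rightarrow> nat" where
  "ppn V E = (LEAST k. 0 < k \<and> (\<exists>L. is_prime_product_labeling V E k L))"

end

theory Submission
  imports Defs
begin

lemma Omega_prime: "prime p \<Longrightarrow> Omega p = 1"
  by (simp add: Omega_def prime_factorization_prime)

lemma Omega_le1: assumes "2 \<le> n" "Omega n \<le> 1" shows "prime n"
proof -
  have n0: "n \<noteq> 0" using assms by auto
  have eq: "n = prod_mset (prime_factorization n)"
    using n0 by (simp add: prod_mset_prime_factorization)
  have "size (prime_factorization n) \<le> 1" using assms by (simp add: Omega_def)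
  then consider "prime_factorization n = {#}" | p where "prime_factorization n = {#p#}"
    by (metis One_nat_def le_SucE le_zero_eq size_1_singleton_mset size_eq_0_iff_empty)
  then show ?thesis
  proof cases
    case 1 then show ?thesis using eq assms by simp
  next
    case 2
    then have "p \<in> prime_factors n" by simp
    then have "prime p" by (rule in_prime_factors_imp_prime)
    moreover have "n = p" using eq 2 by simp
    ultimately show ?thesis by simp
  qed
qed

lemma even_prime_int: assumes "prime (nat \<bar>y::int\<bar>)" "even y" shows "y = 2 \<or> y = -2"
proof -
  have "even (nat \<bar>y\<bar>)" using assms(2) by (simp add: even_nat_iff)
  hence "nat \<bar>y\<bar> = 2" using assms(1) prime_odd_nat prime_ge_2_nat by (metis le_neq_implies_less)
  thus ?thesis by auto
qed

lemma card4: "card {w,x,y,z::int} \<le> 4"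
  by (intro card_insert_le_m1) auto


lemma twin_odd: assumes "prime (p::nat)" "prime (p+2)" shows "odd p"
proof
  assume "even p"
  hence "even (p+2)" by simp
  moreover have "p + 2 > 2" using prime_ge_2_nat[OF assms(1)] by simp
  ultimately show False using prime_odd_nat[OF assms(2)] by simp
qed

lemma exists_lab:
  assumes "finite (V::nat set)"
  shows "\<exists>k L. 0 < k \<and> is_prime_product_labeling V E k L"
proof -
  define L :: "nat \<Rightarrow> int" where "L v = 2 * int v" for v
  define k where "k = 1 + (\<Sum>u\<in>V. \<Sum>v\<in>V. Omega (nat \<bar>L u - L v\<bar>))"
  have "is_prime_product_labeling V E k L"
    unfolding is_prime_product_labeling_def
  proof (intro conjI ballI impI)
    show "inj_on L V" by (auto simp: inj_on_def L_def)
  next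
    fix u v assume "u \<in> V" "v \<in> V" "u \<noteq> v"
    then show "\<bar>L u - L v\<bar> > 1" by (auto simp: L_def)
  next
    fix u v assume uv: "u \<in> V" "v \<in> V" "E u v"
    have "Omega (nat \<bar>L u - L v\<bar>) \<le> (\<Sum>v\<in>V. Omega (nat \<bar>L u - L v\<bar>))"
      by (rule member_le_sum) (use uv assms in auto)
    also have "\<dots> \<le> (\<Sum>u\<in>V. \<Sum>v\<in>V. Omega (nat \<bar>L u - L v\<bar>))"
      by (rule member_le_sum[where f="\<lambda>u. \<Sum>v\<in>V. Omega (nat \<bar>L u - L v\<bar>)"]) (use uv assms in auto)
    finally show "Omega (nat \<bar>L u - L v\<bar>) \<le> k" unfolding k_def by simp
  qed
  thus ?thesis using k_def by auto
qed

lemma twin_cover: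
  assumes "prime (nat \<bar>r::int\<bar>)" "prime (nat \<bar>r - 2\<bar>)"
  shows "(\<exists>p\<in>{p::nat. prime p \<and> prime (p + 2)}. r = 2 + int p) \<or>
         (\<exists>p\<in>{p::nat. prime p \<and> prime (p + 2)}. r = - int p)"
proof (cases "r > 2")
  case True
  define p where "p = nat (r - 2)"
  have "nat \<bar>r - 2\<bar> = p" "nat \<bar>r\<bar> = p + 2" "r = 2 + int p" using True by (auto simp: p_def)
  then show ?thesis using assms by auto
next
  case False
  have "r \<noteq> 2" using assms(2) by auto
  moreover have "r \<noteq> 0" "r \<noteq> 1" using assms(1) by auto
  ultimately have "r < 0" using False by auto
  define p where "p = nat (- r)"
  have "nat \<bar>r\<bar> = p" "nat \<bar>r - 2\<bar> = p + 2" "r = - int p" using \<open>r < 0\<close> by (auto simp: p_def)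
  then show ?thesis using assms by auto
qed

lemma edge_K: "v \<in> {2..c+1} \<Longrightarrow> K11c_E c v 0 \<and> K11c_E c v 1 \<and> K11c_E c 0 1"
  by (auto simp: K11c_E_def K11c_V_def K11c_part_def)


lemma lab_prime:
  assumes lab: "is_prime_product_labeling V E 1 L" and "u \<in> V" "v \<in> V" "E u v" "u \<noteq> v"
  shows "prime (nat \<bar>L u - L v\<bar>)"
proof (rule Omega_le1)
  show "2 \<le> nat \<bar>L u - L v\<bar>" using lab assms unfolding is_prime_product_labeling_def by fastforce
  show "Omega (nat \<bar>L u - L v\<bar>) \<le> 1" using lab assms unfolding is_prime_product_labeling_def by blast
qed

lemma bound:
  assumes lab: "is_prime_product_labeling (K11c_V c) (K11c_E c) 1 L"
    and fin: "finite {p::nat. prime p \<and> prime (p + 2)}"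
  shows "c \<le> 4 \<or> c \<le> 2 * card {p::nat. prime p \<and> prime (p + 2)}"
proof -
  define T where "T = {p::nat. prime p \<and> prime (p + 2)}"
  define a where "a = L 0"
  define b where "b = L 1"
  define X where "X = L ` {2..c+1}"
  have sub: "{2..c+1} \<subseteq> K11c_V c" by (auto simp: K11c_V_def)
  have inj: "inj_on L {2..c+1}"
    using lab sub unfolding is_prime_product_labeling_def by (blast intro: inj_on_subset)
  have cX: "card X = c" unfolding X_def using card_image[OF inj] by simp
  have V01: "0 \<in> K11c_V c" "1 \<in> K11c_V c" by (auto simp: K11c_V_def)
  have px: "prime (nat \<bar>x - a\<bar>) \<and> prime (nat \<bar>x - b\<bar>)" if xX: "x \<in> X" for x
  proof -
    obtain v where v: "v \<in> {2..c+1}" "x = L v" using xX unfolding X_def by blast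
    have "v \<in> K11c_V c" using v sub by auto
    moreover have "v \<noteq> 0" "v \<noteq> 1" using v by auto
    ultimately show ?thesis using lab_prime[OF lab] edge_K[OF v(1)] V01 v(2) a_def b_def by metis
  qed
  have pab: "prime (nat \<bar>a - b\<bar>)"
  proof -
    have "K11c_E c 0 1" by (auto simp: K11c_E_def K11c_V_def K11c_part_def)
    thus ?thesis using lab_prime[OF lab V01] a_def b_def by simp
  qed
  show ?thesis
  proof (cases "even (a - b)")
    case False
    have "X \<subseteq> {a-2, a+2, b-2, b+2}"
    proof
      fix x assume "x \<in> X"
      have "even (x - a) \<or> even (x - b)" using False by presburger
      then have "x - a = 2 \<or> x - a = -2 \<or> x - b = 2 \<or> x - b = -2"
        using even_prime_int px[OF \<open>x \<in> X\<close>] by blast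
      then show "x \<in> {a-2, a+2, b-2, b+2}" by auto
    qed
    hence "card X \<le> 4" by (meson card4 card_mono finite.emptyI finite.insertI order_trans)
    thus ?thesis using cX by simp
  next
    case True
    hence ab: "a - b = 2 \<or> a - b = -2" using even_prime_int pab by blast
    define m where "m = min a b"
    have pm: "prime (nat \<bar>x - m\<bar>) \<and> prime (nat \<bar>(x - m) - 2\<bar>)" if "x \<in> X" for x
      using ab
    proof
      assume h: "a - b = 2"
      hence e1: "x - m = x - b" and e2: "x - m - 2 = x - a" unfolding m_def by auto
      show ?thesis using px[OF that] e1 e2 by metis
    next
      assume h: "a - b = -2"
      hence e1: "x - m = x - a" and e2: "x - m - 2 = x - b" unfolding m_def by auto
      show ?thesis using px[OF that] e1 e2 by metis
    qed
    have "X \<subseteq> (\<lambda>p. m + 2 + int p) ` T \<union> (\<lambda>p. m - int p) ` T"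
    proof
      fix x assume "x \<in> X"
      from twin_cover[of "x - m"] pm[OF this]
      show "x \<in> (\<lambda>p. m + 2 + int p) ` T \<union> (\<lambda>p. m - int p) ` T"
        unfolding T_def by (auto simp: image_iff algebra_simps)
    qed
    hence "card X \<le> card ((\<lambda>p. m + 2 + int p) ` T \<union> (\<lambda>p. m - int p) ` T)"
      using fin T_def by (intro card_mono) auto
    also have "\<dots> \<le> card ((\<lambda>p. m + 2 + int p) ` T) + card ((\<lambda>p. m - int p) ` T)"
      by (rule card_Un_le)
    also have "\<dots> \<le> card T + card T" by (intro add_mono card_image_le) (use fin T_def in auto)
    finally show ?thesis using cX T_def by simp
  qed
qed


lemma construct:
  assumes inf: "infinite {p::nat. prime p \<and> prime (p + 2)}"
  shows "\<exists>L. is_prime_product_labeling (K11c_V c) (K11c_E c) 1 L"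
proof -
  define T where "T = {p::nat. prime p \<and> prime (p + 2)}"
  obtain S where S: "S \<subseteq> T" "finite S" "card S = c"
    using infinite_arbitrarily_large[of T c] inf T_def by auto
  have "card {2..c+1} = card S" using S by simp
  then obtain h where h: "bij_betw h {2..c+1} S"
    using finite_same_card_bij[of "{2..c+1}" S] S by auto
  have hT: "prime (h v) \<and> prime (h v + 2)" if "v \<in> {2..c+1}" for v
    using h that S T_def by (auto simp: bij_betw_def)
  have hodd: "odd (h v)" if "v \<in> {2..c+1}" for v using hT[OF that] twin_odd by blast
  have hge: "h v \<ge> 2" if "v \<in> {2..c+1}" for v using hT[OF that] prime_ge_2_nat by blast
  have hsep: "\<bar>int (h u) - int (h v)\<bar> > 1" if "u \<in> {2..c+1}" "v \<in> {2..c+1}" "u \<noteq> v" for u v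
  proof -
    have "h u \<noteq> h v" using inj_onD[OF bij_betw_imp_inj_on[OF h] _ that(1) that(2)] that(3) by blast
    moreover have "even (int (h u) - int (h v))" using hodd[OF that(1)] hodd[OF that(2)] by simp
    then obtain k where k: "int (h u) - int (h v) = 2 * k" by (rule evenE)
    ultimately have "k \<noteq> 0" by auto
    hence "\<bar>2 * k\<bar> > 1" by (simp add: abs_mult)
    thus ?thesis using k by simp
  qed
  define L :: "nat \<Rightarrow> int" where "L v = (if v = 0 then 0 else if v = 1 then 2 else int (h v) + 2)" for v
  have Vcases: "v = 0 \<or> v = 1 \<or> v \<in> {2..c+1}" if "v \<in> K11c_V c" for v
    using that by (auto simp: K11c_V_def)
  have Lx: "L v = int (h v) + 2" if "v \<in> {2..c+1}" for v using that by (auto simp: L_def)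
  have sep: "\<bar>L u - L v\<bar> > 1" if asm: "u \<in> K11c_V c" "v \<in> K11c_V c" "u \<noteq> v" for u v
  proof -
    consider "u = 0" | "u = 1" | "u \<in> {2..c+1}" using Vcases[OF asm(1)] by blast
    then show ?thesis
    proof cases
      case 1
      consider "v = 0" | "v = 1" | "v \<in> {2..c+1}" using Vcases[OF asm(2)] by blast
      then show ?thesis
      proof cases
        case w3: 3
        then show ?thesis using hge[OF w3] Lx[OF w3] 1 by (auto simp: L_def)
      qed (use 1 asm(3) in \<open>auto simp: L_def\<close>)
    next
      case 2
      consider "v = 0" | "v = 1" | "v \<in> {2..c+1}" using Vcases[OF asm(2)] by blast
      then show ?thesis
      proof cases
        case w3: 3
        then show ?thesis using hge[OF w3] Lx[OF w3] 2 by (auto simp: L_def)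
      qed (use 2 asm(3) in \<open>auto simp: L_def\<close>)
    next
      case 3
      consider "v = 0" | "v = 1" | "v \<in> {2..c+1}" using Vcases[OF asm(2)] by blast
      then show ?thesis
      proof cases
        case w3: 3
        then show ?thesis using hsep[OF \<open>u \<in> {2..c+1}\<close> w3 asm(3)] Lx[OF w3] Lx[OF \<open>u \<in> {2..c+1}\<close>] by simp
      qed (use 3 hge[OF 3] Lx[OF 3] in \<open>auto simp: L_def\<close>)
    qed
  qed
  have pe: "prime (nat \<bar>L u - L v\<bar>)" if asm: "u \<in> K11c_V c" "v \<in> K11c_V c" "K11c_E c u v" for u v
  proof -
    have pu: "min u 2 \<noteq> min v 2" using asm(3) by (simp add: K11c_E_def K11c_part_def)
    consider "u = 0" | "u = 1" | "u \<in> {2..c+1}" using Vcases[OF asm(1)] by blast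
    then show ?thesis
    proof cases
      case 1
      consider "v = 1" | "v \<in> {2..c+1}" using Vcases[OF asm(2)] pu 1 by auto
      then show ?thesis
      proof cases
        case w1: 1
        then show ?thesis using 1 by (simp add: L_def)
      next
        case 2
        then show ?thesis using 1 Lx[OF 2] hT[OF 2] by (simp add: L_def nat_add_distrib)
      qed
    next
      case 2
      consider "v = 0" | "v \<in> {2..c+1}" using Vcases[OF asm(2)] pu 2 by auto
      then show ?thesis
      proof cases
        case 1
        then show ?thesis using 2 by (simp add: L_def)
      next
        case w2: 2
        then show ?thesis using 2 Lx[OF w2] hT[OF w2] by (simp add: L_def)
      qed
    next
      case 3
      consider "v = 0" | "v = 1" using Vcases[OF asm(2)] pu 3 by auto
      then show ?thesis
      proof cases
        case 1
        then show ?thesis using Lx[OF 3] hT[OF 3] by (simp add: L_def nat_add_distrib)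
      next
        case 2
        then show ?thesis using Lx[OF 3] hT[OF 3] by (simp add: L_def)
      qed
    qed
  qed
  have "is_prime_product_labeling (K11c_V c) (K11c_E c) 1 L"
    unfolding is_prime_product_labeling_def
  proof (intro conjI ballI impI)
    show "inj_on L (K11c_V c)" using sep by (force simp: inj_on_def)
  next
    fix u v assume "u \<in> K11c_V c" "v \<in> K11c_V c" "u \<noteq> v"
    then show "\<bar>L u - L v\<bar> > 1" by (rule sep)
  next
    fix u v assume "u \<in> K11c_V c" "v \<in> K11c_V c" "K11c_E c u v"
    then show "Omega (nat \<bar>L u - L v\<bar>) \<le> 1" using pe Omega_prime by simp
  qed
  thus ?thesis by blast
qed

theorem mainTheorem7:
  shows "(\<forall>c::nat. 0 < c \<longrightarrow> ppn (K11c_V c) (K11c_E c) = 1) \<longleftrightarrow>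
         infinite {p::nat. prime p \<and> prime (p + 2)}"
proof
  assume H: "\<forall>c::nat. 0 < c \<longrightarrow> ppn (K11c_V c) (K11c_E c) = 1"
  show "infinite {p::nat. prime p \<and> prime (p + 2)}"
  proof
    assume fin: "finite {p::nat. prime p \<and> prime (p + 2)}"
    define c where "c = 2 * card {p::nat. prime p \<and> prime (p + 2)} + 5"
    define P where "P k = (0 < k \<and> (\<exists>L. is_prime_product_labeling (K11c_V c) (K11c_E c) k L))" for k
    have eq: "ppn (K11c_V c) (K11c_E c) = (LEAST k. P k)" unfolding ppn_def P_def by (rule refl)
    have "0 < c" unfolding c_def by simp
    with H have one: "ppn (K11c_V c) (K11c_E c) = 1" by blast
    have fV: "finite (K11c_V c)" unfolding K11c_V_def by (rule finite_atLeastAtMost)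
    have ex: "\<exists>k. P k" unfolding P_def using exists_lab[OF fV, of "K11c_E c"] by blast
    have "P (LEAST k. P k)" using ex by (rule LeastI_ex)
    hence "P 1" using eq one by simp
    then obtain L where "is_prime_product_labeling (K11c_V c) (K11c_E c) 1 L" unfolding P_def by blast
    from bound[OF this fin] show False unfolding c_def by linarith
  qed
next
  assume inf: "infinite {p::nat. prime p \<and> prime (p + 2)}"
  show "\<forall>c::nat. 0 < c \<longrightarrow> ppn (K11c_V c) (K11c_E c) = 1"
  proof (intro allI impI)
    fix c :: nat
    define P where "P k = (0 < k \<and> (\<exists>L. is_prime_product_labeling (K11c_V c) (K11c_E c) k L))" for k
    have eq: "ppn (K11c_V c) (K11c_E c) = (LEAST k. P k)" unfolding ppn_def P_def by (rule refl)
    obtain L where L: "is_prime_product_labeling (K11c_V c) (K11c_E c) 1 L"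
      using construct[OF inf] by blast
    have "(LEAST k. P k) = 1"
    proof (rule Least_equality)
      show "P 1" unfolding P_def using L by blast
    next
      fix y assume "P y" thus "1 \<le> y" unfolding P_def by simp
    qed
    thus "ppn (K11c_V c) (K11c_E c) = 1" using eq by simp
  qed
qed

end
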